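(* Let $\chi>0$, $\phi\in C^1(\mathbb{R})$ with $\phi'>0$, $\phi(0)>0$, and $g\in C^1([0,\infty))$ positive with exactly one $\beta>0$ such that $g'<0$ on $[0,\beta)$ and $g'>0$ on $(\beta,\infty)$. Let $g(\beta)<u_-<\min\{g(0),\lim_{V\to\infty}g(V)\}$, $0<v_+<\beta<v_-$ with $g(v_\pm)=u_-$, $Q(V)=(v_--V)^2\inf_{z\in(V,v_-]}g'(z)$ on $(\beta,v_-)$, $s_2:=\chi\big(1-\frac{u_-}{g(0)}\big)^{-1}\big[\phi\big(\sqrt{\frac{1}{v_--\beta}\int_\beta^{v_-}Q}\big)-\frac{u_-\phi(0)}{g(0)}\big]$, $B(V)=\frac{s}{\chi}+\frac{u_-}{g(V)}\big(\phi(0)-\frac{s}{\chi}\big)$, $h(W)=\frac{u_-(\chi\phi(0)-s)}{\chi\phi(W)-s}$. Suppose $\chi\phi(0)<s<s_2$, let $v^*\in(\beta,v_-)$ satisfy $0<\phi^{-1}(B(0))<\sqrt{Q(v^* )}$, and choose $w^*$ with $\phi^{-1}(B(0))<w^*<\sqrt{Q(v^* )}$. Then the negative eigenvalue $\lambda_2(E_-)=\frac{-h'(0)-\sqrt{h'(0)^2+4g'(v_-)}}{2}$ of the linearization of $V'=W$, $W'=-h(W)+g(V)$ at $E_-=(v_-,0)$ satisfies $\lambda_2(E_-)<-\frac{w^*}{v_--v^*}<0$. *)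

theory Defs
  imports "HOL-Analysis.Analysis"
begin

definition Qfun :: "(real \<Rightarrow> real) \<Rightarrow> real \<Rightarrow> real \<Rightarrow> real" where
  "Qfun g' vm V = (vm - V)^2 * Inf (g' ` {V<..vm})"

definition s2 :: "real \<Rightarrow> (real \<Rightarrow> real) \<Rightarrow> (real \<Rightarrow> real) \<Rightarrow> (real \<Rightarrow> real)
                  \<Rightarrow> real \<Rightarrow> real \<Rightarrow> real \<Rightarrow> real" where
  "s2 chi \<phi> g g' \<beta> um vm =
     chi * inverse (1 - um / g 0) *
       (\<phi> (sqrt (1 / (vm - \<beta>) * integral {\<beta>..vm} (Qfun g' vm))) - um * \<phi> 0 / g 0)"

definition Bfun :: "real \<Rightarrow> (real \<Rightarrow> real) \<Rightarrow> (real \<Rightarrow> real) \<Rightarrow> real \<Rightarrow> real \<Rightarrow> real \<Rightarrow> real" where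
  "Bfun chi \<phi> g um s V = s / chi + um / g V * (\<phi> 0 - s / chi)"

definition hfun :: "real \<Rightarrow> (real \<Rightarrow> real) \<Rightarrow> real \<Rightarrow> real \<Rightarrow> real \<Rightarrow> real" where
  "hfun chi \<phi> um s W = um * (chi * \<phi> 0 - s) / (chi * \<phi> W - s)"

text \<open>The negative eigenvalue of the linearization of V' = W, W' = -h(W) + g(V) at (v_-, 0).\<close>
definition lambda2 :: "real \<Rightarrow> (real \<Rightarrow> real) \<Rightarrow> (real \<Rightarrow> real) \<Rightarrow> real \<Rightarrow> real \<Rightarrow> real \<Rightarrow> real" where
  "lambda2 chi \<phi> g' um s vm =
     (- deriv (hfun chi \<phi> um s) 0
      - sqrt ((deriv (hfun chi \<phi> um s) 0)^2 + 4 * g' vm)) / 2"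

end

theory Submission
  imports Defs
begin

theorem proposition2p11:
  fixes chi s \<beta> u\<^sub>m v\<^sub>p v\<^sub>m v\<^sub>s w\<^sub>s :: real
    and \<phi> \<phi>' g g' :: "real \<Rightarrow> real"
    and L :: ereal
  assumes chi: "chi > 0"
    and phi_deriv: "\<And>x. (\<phi> has_real_derivative \<phi>' x) (at x)"
    and phi_C1: "continuous_on UNIV \<phi>'"
    and phi'_pos: "\<And>x. \<phi>' x > 0"
    and phi0: "\<phi> 0 > 0"
    and g_deriv: "\<And>x. x \<ge> 0 \<Longrightarrow> (g has_real_derivative g' x) (at x within {0..})"
    and g_C1: "continuous_on {0..} g'"
    and g_pos: "\<And>x. x \<ge> 0 \<Longrightarrow> g x > 0"
    and beta: "\<beta> > 0"
    and g'_neg: "\<And>x. 0 \<le> x \<Longrightarrow> x < \<beta> \<Longrightarrow> g' x < 0"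
    and g'_pos: "\<And>x. x > \<beta> \<Longrightarrow> g' x > 0"
    and g_lim: "((\<lambda>V. ereal (g V)) \<longlongrightarrow> L) at_top"
    and um_low: "g \<beta> < u\<^sub>m"
    and um_up1: "u\<^sub>m < g 0"
    and um_up2: "ereal u\<^sub>m < L"
    and vs: "0 < v\<^sub>p" "v\<^sub>p < \<beta>" "\<beta> < v\<^sub>m"
    and gvp: "g v\<^sub>p = u\<^sub>m"
    and gvm: "g v\<^sub>m = u\<^sub>m"
    and s_low: "chi * \<phi> 0 < s"
    and s_up: "s < s2 chi \<phi> g g' \<beta> u\<^sub>m v\<^sub>m"
    and vstar: "\<beta> < v\<^sub>s" "v\<^sub>s < v\<^sub>m"
    and vstar2: "0 < inv \<phi> (Bfun chi \<phi> g u\<^sub>m s 0)"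
                "inv \<phi> (Bfun chi \<phi> g u\<^sub>m s 0) < sqrt (Qfun g' v\<^sub>m v\<^sub>s)"
    and wstar: "inv \<phi> (Bfun chi \<phi> g u\<^sub>m s 0) < w\<^sub>s" "w\<^sub>s < sqrt (Qfun g' v\<^sub>m v\<^sub>s)"
  shows "lambda2 chi \<phi> g' u\<^sub>m s v\<^sub>m < - w\<^sub>s / (v\<^sub>m - v\<^sub>s) \<and> - w\<^sub>s / (v\<^sub>m - v\<^sub>s) < 0"
proof -
  define w where "w = w\<^sub>s"
  have wpos: "w > 0" using vstar2(1) wstar(1) unfolding w_def by linarith
  have dpos: "v\<^sub>m - v\<^sub>s > 0" using vstar by simp
  have bdd: "bdd_below (g' ` {v\<^sub>s<..v\<^sub>m})"
  proof (rule bdd_belowI[of _ 0])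
    fix x assume "x \<in> g' ` {v\<^sub>s<..v\<^sub>m}"
    then obtain z where "z > v\<^sub>s" "x = g' z" by auto
    then show "0 \<le> x" using vstar g'_pos[of z] by simp
  qed
  have inf_le: "Inf (g' ` {v\<^sub>s<..v\<^sub>m}) \<le> g' v\<^sub>m"
    by (rule cInf_lower) (use bdd vstar in auto)
  have Qle: "Qfun g' v\<^sub>m v\<^sub>s \<le> (v\<^sub>m - v\<^sub>s)^2 * g' v\<^sub>m"
    unfolding Qfun_def by (rule mult_left_mono[OF inf_le]) simp
  have gvm_pos: "g' v\<^sub>m > 0" using g'_pos vs by simp
  have "w < sqrt ((v\<^sub>m - v\<^sub>s)^2 * g' v\<^sub>m)"
    using wstar(2) Qle unfolding w_def by (meson less_le_trans real_sqrt_le_mono)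
  also have "\<dots> = (v\<^sub>m - v\<^sub>s) * sqrt (g' v\<^sub>m)" using dpos by (simp add: real_sqrt_mult)
  finally have wlt: "w / (v\<^sub>m - v\<^sub>s) < sqrt (g' v\<^sub>m)" using dpos by (simp add: field_simps)
  define c where "c = u\<^sub>m * (chi * \<phi> 0 - s)"
  define d where "d = chi * \<phi> 0 - s"
  have dneg: "d < 0" using s_low unfolding d_def by simp
  have upos: "u\<^sub>m > 0" using g_pos[of \<beta>] beta um_low by simp
  have cneg: "c < 0" using upos dneg unfolding c_def d_def by (simp add: mult_pos_neg)
  have hd: "(hfun chi \<phi> u\<^sub>m s has_real_derivative (- c * (chi * \<phi>' 0) / d^2)) (at 0)"
  proof -
    have "((\<lambda>W. c / (chi * \<phi> W - s)) has_real_derivative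
        (- c * (chi * \<phi>' 0 - 0) / (chi * \<phi> 0 - s)^2)) (at 0)"
      apply (rule derivative_eq_intros refl phi_deriv)+
      using dneg unfolding d_def by (auto simp: power2_eq_square)
    then show ?thesis unfolding hfun_def c_def d_def by (simp add: fun_eq_iff)
  qed
  have hpos: "- c * (chi * \<phi>' 0) / d^2 > 0"
    using cneg dneg chi phi'_pos[of 0] by (simp add: mult_neg_pos divide_neg_pos)
  define h' where "h' = deriv (hfun chi \<phi> u\<^sub>m s) 0"
  have h'pos: "h' > 0" using DERIV_imp_deriv[OF hd] hpos unfolding h'_def by simp
  have "2 * sqrt (g' v\<^sub>m) = sqrt (4 * g' v\<^sub>m)"
    by (simp add: real_sqrt_mult)
  also have "\<dots> \<le> sqrt (h'^2 + 4 * g' v\<^sub>m)" by simp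
  finally have "lambda2 chi \<phi> g' u\<^sub>m s v\<^sub>m < - sqrt (g' v\<^sub>m)"
    unfolding lambda2_def h'_def[symmetric] using h'pos by simp
  then show ?thesis using wlt wpos dpos unfolding w_def by auto
qed

end
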